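(* For each positive integer $n\ge 4$, there exists a family of $n$ digraphs of order $4^n$, each strongly connected and non symmetric, which are pairwise integral strongly quasi-cospectral.
   Context: A sidigraph is a digraph (no loops, at most one arc from $u$ to $v$) with a sign $\pm1$ on each arc; its adjacency matrix has entry $\sigma(v_i,v_j)$ if there is an arc from $v_i$ to $v_j$ and $0$ otherwise, and its spectrum is the multiset of eigenvalues of this matrix. An (unsigned) digraph is identified with the sidigraph having all arcs positive. A sidigraph on a digraph $D$ is a sidigraph whose underlying digraph is $D$. Two (si)digraphs are cospectral if they have the same spectrum. The sign of a cycle is the product of its arc signs; a sidigraph is cycle balanced if every directed cycle is positive. A digraph is symmetric if whenever $(u,v)$ is an arc so is $(v,u)$; it is strongly connected in the usual sense. Two digraphs $D_1,D_2$ are integral strongly quasi-cospectral if $D_1$ and $D_2$ are cospectral with all eigenvalues integers, and there exist non cycle balanced sidigraphs $S_1$ on $D_1$ and $S_2$ on $D_2$ that are cospectral with all eigenvalues integers. *)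

theory Defs
  imports "Jordan_Normal_Form.Char_Poly" "HOL-Computational_Algebra.Polynomial"
begin

definition is_digraph :: "nat \<Rightarrow> (nat \<Rightarrow> nat \<Rightarrow> bool) \<Rightarrow> bool" where
  "is_digraph N arc \<longleftrightarrow> (\<forall>u v. arc u v \<longrightarrow> u < N \<and> v < N \<and> u \<noteq> v)"

definition is_signing :: "(nat \<Rightarrow> nat \<Rightarrow> bool) \<Rightarrow> (nat \<Rightarrow> nat \<Rightarrow> int) \<Rightarrow> bool" where
  "is_signing arc sg \<longleftrightarrow> (\<forall>u v. arc u v \<longrightarrow> sg u v = 1 \<or> sg u v = -1)"

definition adj_mat :: "nat \<Rightarrow> (nat \<Rightarrow> nat \<Rightarrow> bool) \<Rightarrow> (nat \<Rightarrow> nat \<Rightarrow> int) \<Rightarrow> complex mat" where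
  "adj_mat N arc sg = mat N N (\<lambda>(i,j). if arc i j then of_int (sg i j) else 0)"

definition sd_spectrum :: "nat \<Rightarrow> (nat \<Rightarrow> nat \<Rightarrow> bool) \<Rightarrow> (nat \<Rightarrow> nat \<Rightarrow> int) \<Rightarrow> complex multiset" where
  "sd_spectrum N arc sg = proots (char_poly (adj_mat N arc sg))"

definition dg_spectrum :: "nat \<Rightarrow> (nat \<Rightarrow> nat \<Rightarrow> bool) \<Rightarrow> complex multiset" where
  "dg_spectrum N arc = sd_spectrum N arc (\<lambda>_ _. 1)"

definition integral_spectrum :: "complex multiset \<Rightarrow> bool" where
  "integral_spectrum S \<longleftrightarrow> (\<forall>x \<in># S. x \<in> \<int>)"

definition is_dcycle :: "nat \<Rightarrow> (nat \<Rightarrow> nat \<Rightarrow> bool) \<Rightarrow> nat list \<Rightarrow> bool" where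
  "is_dcycle N arc vs \<longleftrightarrow> length vs \<ge> 2 \<and> distinct vs \<and> (\<forall>v\<in>set vs. v < N) \<and>
     (\<forall>i < length vs. arc (vs ! i) (vs ! ((i + 1) mod length vs)))"

definition cycle_sign :: "(nat \<Rightarrow> nat \<Rightarrow> int) \<Rightarrow> nat list \<Rightarrow> int" where
  "cycle_sign sg vs = (\<Prod>i<length vs. sg (vs ! i) (vs ! ((i + 1) mod length vs)))"

definition cycle_balanced :: "nat \<Rightarrow> (nat \<Rightarrow> nat \<Rightarrow> bool) \<Rightarrow> (nat \<Rightarrow> nat \<Rightarrow> int) \<Rightarrow> bool" where
  "cycle_balanced N arc sg \<longleftrightarrow> (\<forall>vs. is_dcycle N arc vs \<longrightarrow> cycle_sign sg vs = 1)"

definition strongly_connected :: "nat \<Rightarrow> (nat \<Rightarrow> nat \<Rightarrow> bool) \<Rightarrow> bool" where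
  "strongly_connected N arc \<longleftrightarrow> (\<forall>u<N. \<forall>v<N. (u, v) \<in> {(x, y). arc x y}\<^sup>*)"

definition symmetric_dg :: "(nat \<Rightarrow> nat \<Rightarrow> bool) \<Rightarrow> bool" where
  "symmetric_dg arc \<longleftrightarrow> (\<forall>u v. arc u v \<longrightarrow> arc v u)"

definition dg_isomorphic :: "nat \<Rightarrow> (nat \<Rightarrow> nat \<Rightarrow> bool) \<Rightarrow> (nat \<Rightarrow> nat \<Rightarrow> bool) \<Rightarrow> bool" where
  "dg_isomorphic N arc1 arc2 \<longleftrightarrow> (\<exists>f. bij_betw f {0..<N} {0..<N} \<and>
     (\<forall>u<N. \<forall>v<N. arc1 u v \<longleftrightarrow> arc2 (f u) (f v)))"

definition integral_strongly_quasi_cospectral ::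
  "nat \<Rightarrow> (nat \<Rightarrow> nat \<Rightarrow> bool) \<Rightarrow> (nat \<Rightarrow> nat \<Rightarrow> bool) \<Rightarrow> bool" where
  "integral_strongly_quasi_cospectral N arc1 arc2 \<longleftrightarrow>
     dg_spectrum N arc1 = dg_spectrum N arc2 \<and> integral_spectrum (dg_spectrum N arc1) \<and>
     (\<exists>sg1 sg2. is_signing arc1 sg1 \<and> is_signing arc2 sg2 \<and>
        \<not> cycle_balanced N arc1 sg1 \<and> \<not> cycle_balanced N arc2 sg2 \<and>
        sd_spectrum N arc1 sg1 = sd_spectrum N arc2 sg2 \<and>
        integral_spectrum (sd_spectrum N arc1 sg1))"

end

theory Submission
  imports Defs
begin

lemma char_poly_zero_mat: "char_poly (0\<^sub>m m m :: 'a::comm_ring_1 mat) = monom 1 m"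
proof -
  have "char_poly (0\<^sub>m m m :: 'a mat) = (\<Prod>a\<leftarrow>diag_mat (0\<^sub>m m m). [:- a, 1:])"
    by (rule char_poly_upper_triangular[of _ m], auto simp: upper_triangular_def)
  also have "diag_mat (0\<^sub>m m m :: 'a mat) = replicate m 0"
    by (rule nth_equalityI, auto simp: diag_mat_def)
  also have "(\<Prod>a\<leftarrow>replicate m (0::'a). [:- a, 1:]) = monom 1 m"
    by (simp add: prod_list_replicate monom_altdef)
  finally show ?thesis .
qed

lemma char_poly_four_block_ur0:
  fixes A :: "'a::idom mat"
  assumes A: "A \<in> carrier_mat n n" and C: "C \<in> carrier_mat m n" and D: "D \<in> carrier_mat m m"
  shows "char_poly (four_block_mat A (0\<^sub>m n m) C D) = char_poly A * char_poly D"
proof -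
  let ?cm = "\<lambda> A. [:0, 1:] \<cdot>\<^sub>m 1\<^sub>m (dim_row A) + map_mat (\<lambda>a. [:- a:]) A"
  have "char_poly (four_block_mat A (0\<^sub>m n m) C D) = det (?cm (four_block_mat A (0\<^sub>m n m) C D))"
    unfolding char_poly_defs by simp
  also have "?cm (four_block_mat A (0\<^sub>m n m) C D) = four_block_mat (?cm A) (0\<^sub>m n m) (map_mat (\<lambda>a. [:- a:]) C) (?cm D)"
    by (rule eq_matI, insert A C D, auto simp: one_poly_def)
  also have "det \<dots> = det (?cm A) * det (?cm D)"
    by (rule det_four_block_mat_upper_right_zero[OF _ refl], insert A C D, auto)
  also have "\<dots> = char_poly A * char_poly D" unfolding char_poly_defs ..
  finally show ?thesis .
qed

lemma char_poly_XY:
  fixes X :: "'a::idom mat"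
  assumes X: "X \<in> carrier_mat n k" and Y: "Y \<in> carrier_mat k n"
  shows "monom 1 k * char_poly (X * Y) = monom 1 n * char_poly (Y * X)"
proof -
  define P where "P = four_block_mat (1\<^sub>m n) X (0\<^sub>m k n) (1\<^sub>m k)"
  define Q where "Q = four_block_mat (1\<^sub>m n) (-X) (0\<^sub>m k n) (1\<^sub>m k)"
  define M1 where "M1 = four_block_mat (X * Y) (0\<^sub>m n k) Y (0\<^sub>m k k)"
  define M2 where "M2 = four_block_mat (0\<^sub>m n n) (0\<^sub>m n k) Y (Y * X)"
  have XY: "X * Y \<in> carrier_mat n n" and YX: "Y * X \<in> carrier_mat k k" using X Y by auto
  have Pc: "P \<in> carrier_mat (n+k) (n+k)" unfolding P_def using X by auto
  have Qc: "Q \<in> carrier_mat (n+k) (n+k)" unfolding Q_def using X by auto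
  have M1c: "M1 \<in> carrier_mat (n+k) (n+k)" unfolding M1_def using XY by auto
  have M2c: "M2 \<in> carrier_mat (n+k) (n+k)" unfolding M2_def using YX by auto
  have PQ: "P * Q = 1\<^sub>m (n+k)" unfolding P_def Q_def
    by (subst mult_four_block_mat[of _ n n _ k _ k], insert X, auto intro!: eq_matI)
  have QP: "Q * P = 1\<^sub>m (n+k)" unfolding P_def Q_def
    by (subst mult_four_block_mat[of _ n n _ k _ k], insert X, auto intro!: eq_matI)
  have e1: "P * M2 = four_block_mat (X * Y) (X * (Y * X)) Y (Y * X)" unfolding P_def M2_def
    by (subst mult_four_block_mat[of _ n n _ k _ k], insert X Y, auto)
  have e2: "M1 * P = four_block_mat (X * Y) (X * Y * X) Y (Y * X)" unfolding P_def M1_def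
    by (subst mult_four_block_mat[of _ n n _ k _ k], insert X Y, auto)
  have "P * M2 = M1 * P" unfolding e1 e2 using assoc_mult_mat[OF X Y X] by simp
  hence "P * M2 * Q = M1 * P * Q" by simp
  also have "M1 * P * Q = M1 * (P * Q)" by (rule assoc_mult_mat[OF M1c Pc Qc])
  also have "\<dots> = M1" unfolding PQ by (rule right_mult_one_mat[OF M1c])
  finally have "M1 = P * M2 * Q" by simp
  hence sim: "similar_mat M1 M2"
    by (intro similar_matI[OF _ PQ QP], insert Pc Qc M1c M2c, auto)
  have "char_poly M1 = char_poly (X * Y) * monom 1 k"
    unfolding M1_def by (subst char_poly_four_block_ur0[OF XY Y], auto simp: char_poly_zero_mat)
  moreover have "char_poly M2 = monom 1 n * char_poly (Y * X)"
    unfolding M2_def by (subst char_poly_four_block_ur0[OF _ Y YX], auto simp: char_poly_zero_mat)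
  ultimately show ?thesis using char_poly_similar[OF sim] by (simp add: mult.commute)
qed


definition gN :: "nat \<Rightarrow> nat" where "gN a = a*a + 6*a + 9"
definition cC :: "nat \<Rightarrow> nat \<Rightarrow> bool" where "cC a u \<longleftrightarrow> u < a*a"
definition cX :: "nat \<Rightarrow> nat \<Rightarrow> bool" where "cX a u \<longleftrightarrow> a*a \<le> u \<and> u < a*a+7"
definition y1 :: "nat \<Rightarrow> nat" where "y1 a = a*a+7"
definition cZ1 :: "nat \<Rightarrow> nat \<Rightarrow> nat \<Rightarrow> bool" where "cZ1 a p u \<longleftrightarrow> a*a+8 \<le> u \<and> u < a*a+8+p"
definition cY2 :: "nat \<Rightarrow> nat \<Rightarrow> nat \<Rightarrow> bool" where "cY2 a p u \<longleftrightarrow> a*a+8+p \<le> u \<and> u < a*a+6*a+8"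
definition z2 :: "nat \<Rightarrow> nat" where "z2 a = a*a+6*a+8"

definition vtyp :: "nat \<Rightarrow> nat \<Rightarrow> nat \<Rightarrow> nat" where
  "vtyp a p u = (if cC a u then 1 else if u = y1 a then 2 else if cY2 a p u then 3 else 0)"
definition supp :: "nat \<Rightarrow> nat \<Rightarrow> nat \<Rightarrow> nat \<Rightarrow> bool" where
  "supp a p b v \<longleftrightarrow> (b = 0 \<and> cC a v) \<or> (b = 1 \<and> (cX a v \<or> v = y1 a \<or> cY2 a p v)) \<or>
     (b = 2 \<and> cZ1 a p v) \<or> (b = 3 \<and> v = z2 a)"
definition garc :: "nat \<Rightarrow> nat \<Rightarrow> nat \<Rightarrow> nat \<Rightarrow> bool" where
  "garc a p u v \<longleftrightarrow> u < gN a \<and> supp a p (vtyp a p u) v"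

lemmas cdefs = gN_def cC_def cX_def y1_def cZ1_def cY2_def z2_def

definition Xm :: "nat \<Rightarrow> nat \<Rightarrow> complex mat" where
  "Xm a p = mat (gN a) 4 (\<lambda>(u,b). if vtyp a p u = b then 1 else 0)"
definition Ym :: "nat \<Rightarrow> nat \<Rightarrow> int \<Rightarrow> complex mat" where
  "Ym a p s = mat 4 (gN a) (\<lambda>(b,v). if supp a p b v then of_int s else 0)"

lemma vtyp_lt: "vtyp a p u < 4" unfolding vtyp_def by auto

lemma adj_XY: "adj_mat (gN a) (garc a p) (\<lambda>_ _. s) = Xm a p * Ym a p s"
proof (rule eq_matI)
  fix i j assume i: "i < dim_row (Xm a p * Ym a p s)" and j: "j < dim_col (Xm a p * Ym a p s)"
  hence i': "i < gN a" and j': "j < gN a" by (auto simp: Xm_def Ym_def)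
  have "(Xm a p * Ym a p s) $$ (i,j) = (\<Sum>b\<in>{0..<4}. (if vtyp a p i = b then 1 else 0) * (if supp a p b j then of_int s else 0))"
    using i' j' by (simp add: Xm_def Ym_def scalar_prod_def)
  also have "\<dots> = (\<Sum>b\<in>{0..<4}. if vtyp a p i = b then (if supp a p b j then of_int s else 0) else 0)"
    by (rule sum.cong, auto)
  also have "\<dots> = (if supp a p (vtyp a p i) j then of_int s else 0)"
    using vtyp_lt[of a p i] by (subst sum.delta'[OF finite_atLeastLessThan], auto)
  finally show "adj_mat (gN a) (garc a p) (\<lambda>_ _. s) $$ (i, j) = (Xm a p * Ym a p s) $$ (i, j)"
    using i' j' by (simp add: adj_mat_def garc_def)
qed (auto simp: adj_mat_def Xm_def Ym_def)


definition SS :: "nat \<Rightarrow> nat \<Rightarrow> nat \<Rightarrow> nat \<Rightarrow> nat set" where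
  "SS a p b b' = (if b=0 \<and> b'=1 then {0..<a*a} else if b=1 \<and> b'=0 then {a*a..<a*a+7}
     else if b=1 \<and> b'=2 then {a*a+7..<a*a+8} else if b=1 \<and> b'=3 then {a*a+8+p..<a*a+6*a+8}
     else if b=2 \<and> b'=0 then {a*a+8..<a*a+8+p} else if b=3 \<and> b'=0 then {a*a+6*a+8..<a*a+6*a+9} else {})"

lemma four_cases: "(b::nat) < 4 \<Longrightarrow> b = 0 \<or> b = 1 \<or> b = 2 \<or> b = 3" by auto

lemma set_SS_0_0: assumes "1 \<le> p" "p < 6*a"
  shows "{v \<in> {0..<gN a}. supp a p 0 v \<and> vtyp a p v = 0} = SS a p 0 0"
  using assms by (auto simp add: SS_def supp_def vtyp_def cdefs)

lemma set_SS_0_1: assumes "1 \<le> p" "p < 6*a"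
  shows "{v \<in> {0..<gN a}. supp a p 0 v \<and> vtyp a p v = 1} = SS a p 0 1"
  using assms by (auto simp add: SS_def supp_def vtyp_def cdefs)

lemma set_SS_0_2: assumes "1 \<le> p" "p < 6*a"
  shows "{v \<in> {0..<gN a}. supp a p 0 v \<and> vtyp a p v = 2} = SS a p 0 2"
  using assms by (auto simp add: SS_def supp_def vtyp_def cdefs)

lemma set_SS_0_3: assumes "1 \<le> p" "p < 6*a"
  shows "{v \<in> {0..<gN a}. supp a p 0 v \<and> vtyp a p v = 3} = SS a p 0 3"
  using assms by (auto simp add: SS_def supp_def vtyp_def cdefs)

lemma set_SS_1_0: assumes "1 \<le> p" "p < 6*a"
  shows "{v \<in> {0..<gN a}. supp a p 1 v \<and> vtyp a p v = 0} = SS a p 1 0"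
  using assms by (auto simp add: SS_def supp_def vtyp_def cdefs)

lemma set_SS_1_1: assumes "1 \<le> p" "p < 6*a"
  shows "{v \<in> {0..<gN a}. supp a p 1 v \<and> vtyp a p v = 1} = SS a p 1 1"
  using assms by (auto simp add: SS_def supp_def vtyp_def cdefs)

lemma set_SS_1_2: assumes "1 \<le> p" "p < 6*a"
  shows "{v \<in> {0..<gN a}. supp a p 1 v \<and> vtyp a p v = 2} = SS a p 1 2"
  using assms by (auto simp add: SS_def supp_def vtyp_def cdefs)

lemma set_SS_1_3: assumes "1 \<le> p" "p < 6*a"
  shows "{v \<in> {0..<gN a}. supp a p 1 v \<and> vtyp a p v = 3} = SS a p 1 3"
  using assms by (auto simp add: SS_def supp_def vtyp_def cdefs)

lemma set_SS_2_0: assumes "1 \<le> p" "p < 6*a"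
  shows "{v \<in> {0..<gN a}. supp a p 2 v \<and> vtyp a p v = 0} = SS a p 2 0"
  using assms by (auto simp add: SS_def supp_def vtyp_def cdefs)

lemma set_SS_2_1: assumes "1 \<le> p" "p < 6*a"
  shows "{v \<in> {0..<gN a}. supp a p 2 v \<and> vtyp a p v = 1} = SS a p 2 1"
  using assms by (auto simp add: SS_def supp_def vtyp_def cdefs)

lemma set_SS_2_2: assumes "1 \<le> p" "p < 6*a"
  shows "{v \<in> {0..<gN a}. supp a p 2 v \<and> vtyp a p v = 2} = SS a p 2 2"
  using assms by (auto simp add: SS_def supp_def vtyp_def cdefs)

lemma set_SS_2_3: assumes "1 \<le> p" "p < 6*a"
  shows "{v \<in> {0..<gN a}. supp a p 2 v \<and> vtyp a p v = 3} = SS a p 2 3"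
  using assms by (auto simp add: SS_def supp_def vtyp_def cdefs)

lemma set_SS_3_0: assumes "1 \<le> p" "p < 6*a"
  shows "{v \<in> {0..<gN a}. supp a p 3 v \<and> vtyp a p v = 0} = SS a p 3 0"
  using assms by (auto simp add: SS_def supp_def vtyp_def cdefs)

lemma set_SS_3_1: assumes "1 \<le> p" "p < 6*a"
  shows "{v \<in> {0..<gN a}. supp a p 3 v \<and> vtyp a p v = 1} = SS a p 3 1"
  using assms by (auto simp add: SS_def supp_def vtyp_def cdefs)

lemma set_SS_3_2: assumes "1 \<le> p" "p < 6*a"
  shows "{v \<in> {0..<gN a}. supp a p 3 v \<and> vtyp a p v = 2} = SS a p 3 2"
  using assms by (auto simp add: SS_def supp_def vtyp_def cdefs)

lemma set_SS_3_3: assumes "1 \<le> p" "p < 6*a"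
  shows "{v \<in> {0..<gN a}. supp a p 3 v \<and> vtyp a p v = 3} = SS a p 3 3"
  using assms by (auto simp add: SS_def supp_def vtyp_def cdefs)


lemma set_SS: assumes "1 \<le> p" "p < 6*a" "b < 4" "c < 4"
  shows "{v \<in> {0..<gN a}. supp a p b v \<and> vtyp a p v = c} = SS a p b c"
proof -
  have "b = 0 \<or> b = 1 \<or> b = 2 \<or> b = 3" "c = 0 \<or> c = 1 \<or> c = 2 \<or> c = 3" using assms(3,4) by auto
  thus ?thesis using set_SS_0_0[OF assms(1,2)] set_SS_0_1[OF assms(1,2)] set_SS_0_2[OF assms(1,2)] set_SS_0_3[OF assms(1,2)]
     set_SS_1_0[OF assms(1,2)] set_SS_1_1[OF assms(1,2)] set_SS_1_2[OF assms(1,2)] set_SS_1_3[OF assms(1,2)]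
     set_SS_2_0[OF assms(1,2)] set_SS_2_1[OF assms(1,2)] set_SS_2_2[OF assms(1,2)] set_SS_2_3[OF assms(1,2)]
     set_SS_3_0[OF assms(1,2)] set_SS_3_1[OF assms(1,2)] set_SS_3_2[OF assms(1,2)] set_SS_3_3[OF assms(1,2)]
    by (elim disjE) simp_all
qed

definition Mm :: "nat \<Rightarrow> nat \<Rightarrow> int \<Rightarrow> complex mat" where
  "Mm a p s = mat 4 4 (\<lambda>(b,c). of_int s * of_nat (card (SS a p b c)))"

lemma YX_Mm: assumes "1 \<le> p" "p < 6*a"
  shows "Ym a p s * Xm a p = Mm a p s"
proof (rule eq_matI)
  fix i j assume i: "i < dim_row (Mm a p s)" and j: "j < dim_col (Mm a p s)"
  hence i': "i < 4" and j': "j < 4" by (auto simp: Mm_def)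
  have "(Ym a p s * Xm a p) $$ (i,j) = (\<Sum>v\<in>{0..<gN a}. (if supp a p i v then of_int s else 0) * (if vtyp a p v = j then 1 else 0))"
    using i' j' by (simp add: Xm_def Ym_def scalar_prod_def)
  also have "\<dots> = (\<Sum>v\<in>{0..<gN a}. if supp a p i v \<and> vtyp a p v = j then of_int s else 0)"
    by (rule sum.cong, auto)
  also have "\<dots> = (\<Sum>v\<in>{v \<in> {0..<gN a}. supp a p i v \<and> vtyp a p v = j}. of_int s)"
    by (subst sum.inter_filter, auto)
  also have "\<dots> = of_int s * of_nat (card (SS a p i j))"
    unfolding set_SS[OF assms i' j'] by simp
  finally show "(Ym a p s * Xm a p) $$ (i,j) = Mm a p s $$ (i,j)"
    using i' j' by (simp add: Mm_def)
qed (auto simp: Mm_def Xm_def Ym_def)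

definition Xp :: "nat \<Rightarrow> nat \<Rightarrow> complex mat" where
  "Xp a p = mat 4 3 (\<lambda>(b,c). if c = 0 then (if b = 1 then 7 else if b = 2 then of_nat p else if b = 3 then 1 else 0)
     else if c = 1 then (if b = 0 then of_nat (a*a) else 0) else (if b = 1 then 1 else 0))"
definition Yp :: "nat \<Rightarrow> nat \<Rightarrow> int \<Rightarrow> complex mat" where
  "Yp a p s = mat 3 4 (\<lambda>(b,c). if b = c then of_int s else if b = 2 \<and> c = 3 then of_int s * of_nat (6*a-p) else 0)"
definition Mp :: "nat \<Rightarrow> int \<Rightarrow> complex mat" where
  "Mp a s = mat 3 3 (\<lambda>(b,c). of_int s * (if b = 0 \<and> c = 1 then of_nat (a*a) else if b = 1 \<and> c = 0 then 7
     else if b = 1 \<and> c = 2 then 1 else if b = 2 \<and> c = 0 then 6 * of_nat a else 0))"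

lemma sum4: "(\<Sum>k\<in>{0..<4::nat}. f k) = f 0 + f 1 + f 2 + (f 3 :: 'a::comm_monoid_add)"
  by (simp add: eval_nat_numeral atLeast0_lessThan_Suc add.commute add.left_commute)
lemma sum3: "(\<Sum>k\<in>{0..<3::nat}. f k) = f 0 + f 1 + (f 2 :: 'a::comm_monoid_add)"
  by (simp add: eval_nat_numeral atLeast0_lessThan_Suc add.commute add.left_commute)

lemma Mm_XpYp: assumes "1 \<le> p" "p < 6*a"
  shows "Mm a p s = Xp a p * Yp a p s"
proof (rule eq_matI)
  fix i j assume i: "i < dim_row (Xp a p * Yp a p s)" and j: "j < dim_col (Xp a p * Yp a p s)"
  hence i': "i < 4" and j': "j < 4" by (auto simp: Xp_def Yp_def)
  have "i = 0 \<or> i = 1 \<or> i = 2 \<or> i = 3" "j = 0 \<or> j = 1 \<or> j = 2 \<or> j = 3" using i' j' by auto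
  thus "Mm a p s $$ (i,j) = (Xp a p * Yp a p s) $$ (i,j)"
    using assms by (elim disjE) (simp_all add: Mm_def Xp_def Yp_def scalar_prod_def sum3 SS_def)
qed (auto simp: Mm_def Xp_def Yp_def)

lemma YpXp: assumes "1 \<le> p" "p < 6*a"
  shows "Yp a p s * Xp a p = Mp a s"
proof (rule eq_matI)
  fix i j assume i: "i < dim_row (Mp a s)" and j: "j < dim_col (Mp a s)"
  hence i': "i < 3" and j': "j < 3" by (auto simp: Mp_def)
  have "i = 0 \<or> i = 1 \<or> i = 2" "j = 0 \<or> j = 1 \<or> j = 2" using i' j' by auto
  thus "(Yp a p s * Xp a p) $$ (i,j) = Mp a s $$ (i,j)"
    using assms by (elim disjE) (simp_all add: Mp_def Xp_def Yp_def scalar_prod_def sum4 algebra_simps of_nat_diff)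
qed (auto simp: Mp_def Xp_def Yp_def)

lemma Xm_carr: "Xm a p \<in> carrier_mat (gN a) 4" by (simp add: Xm_def)
lemma Ym_carr: "Ym a p s \<in> carrier_mat 4 (gN a)" by (simp add: Ym_def)
lemma Xp_carr: "Xp a p \<in> carrier_mat 4 3" by (simp add: Xp_def)
lemma Yp_carr: "Yp a p s \<in> carrier_mat 3 4" by (simp add: Yp_def)

lemma cp_chain: assumes "1 \<le> p" "p < 6*a"
  shows "monom 1 7 * char_poly (adj_mat (gN a) (garc a p) (\<lambda>_ _. s)) = monom 1 (gN a + 4) * char_poly (Mp a s)"
proof -
  have e1: "monom 1 4 * char_poly (adj_mat (gN a) (garc a p) (\<lambda>_ _. s)) = monom 1 (gN a) * char_poly (Mm a p s)"
    unfolding adj_XY YX_Mm[OF assms, symmetric] by (rule char_poly_XY[OF Xm_carr Ym_carr])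
  have e2: "monom 1 3 * char_poly (Mm a p s) = monom 1 4 * char_poly (Mp a s)"
    unfolding Mm_XpYp[OF assms] YpXp[OF assms, symmetric] by (rule char_poly_XY[OF Xp_carr Yp_carr])
  have "monom 1 7 * char_poly (adj_mat (gN a) (garc a p) (\<lambda>_ _. s)) =
     monom 1 3 * (monom 1 4 * char_poly (adj_mat (gN a) (garc a p) (\<lambda>_ _. s)))"
    by (simp add: mult_monom mult.assoc[symmetric])
  also have "\<dots> = monom 1 (gN a) * (monom 1 3 * char_poly (Mm a p s))" unfolding e1 by (simp add: ac_simps)
  also have "\<dots> = monom 1 (gN a + 4) * char_poly (Mp a s)" unfolding e2
    by (simp add: mult_monom mult.assoc[symmetric])
  finally show ?thesis .
qed

lemma cp_eq: assumes "1 \<le> p" "p < 6*a" "1 \<le> p'" "p' < 6*a"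
  shows "char_poly (adj_mat (gN a) (garc a p) (\<lambda>_ _. s)) = char_poly (adj_mat (gN a) (garc a p') (\<lambda>_ _. s))"
proof -
  have "monom 1 7 * char_poly (adj_mat (gN a) (garc a p) (\<lambda>_ _. s)) = monom 1 7 * char_poly (adj_mat (gN a) (garc a p') (\<lambda>_ _. s))"
    unfolding cp_chain[OF assms(1,2)] cp_chain[OF assms(3,4)] ..
  moreover have "(monom 1 7 :: complex poly) \<noteq> 0" by simp
  ultimately show ?thesis by simp
qed

lemma alg_roots: fixes mu v0 v1 v2 A :: complex
  assumes "A * A * v1 = mu * v0" "7 * v0 + v2 = mu * v1" "6 * A * v0 = mu * v2" "A \<noteq> 0"
    "\<not> (v0 = 0 \<and> v1 = 0 \<and> v2 = 0)"
  shows "mu = -A \<or> mu = -2*A \<or> mu = 3*A"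
proof -
  have id: "(mu + A) * (mu + 2*A) * (mu - 3*A) * v0 = mu^2 * (mu * v0 - A*A*v1) + A*A*mu*(mu*v1 - 7*v0 - v2) + A*A*(mu*v2 - 6*A*v0)"
    by (simp add: algebra_simps power2_eq_square power3_eq_cube)
  have z1: "mu * v0 - A*A*v1 = 0" and z2: "mu*v1 - 7*v0 - v2 = 0" and z3: "mu*v2 - 6*A*v0 = 0"
    using assms(1-3) by (simp_all add: algebra_simps)
  have "(mu + A) * (mu + 2*A) * (mu - 3*A) * v0 = 0" by (simp only: id z1 z2 z3) simp
  moreover have "v0 \<noteq> 0"
  proof
    assume "v0 = 0"
    hence "v1 = 0" using assms(1,4) by simp
    hence "v2 = 0" using assms(2) \<open>v0 = 0\<close> by simp
    thus False using assms(5) \<open>v0 = 0\<close> \<open>v1 = 0\<close> by simp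
  qed
  ultimately have "(mu + A) * (mu + 2*A) * (mu - 3*A) = 0" by simp
  hence "(mu + A = 0 \<or> mu + 2*A = 0) \<or> mu - 3*A = 0" by (simp only: mult_eq_0_iff)
  thus ?thesis
  proof (elim disjE)
    assume "mu + A = 0" thus ?thesis using eq_neg_iff_add_eq_0 by blast
  next
    assume "mu + 2*A = 0" hence "mu = -(2*A)" using eq_neg_iff_add_eq_0 by blast
    thus ?thesis by simp
  next
    assume "mu - 3*A = 0" thus ?thesis by simp
  qed
qed

lemma ssinv: fixes S P Q :: complex assumes "S * S = 1" "S * P = Q" shows "P = S * Q"
proof -
  have "P = (S * S) * P" using assms(1) by simp
  also have "\<dots> = S * Q" using assms(2) by (simp add: mult.assoc)
  finally show ?thesis .
qed

lemma mp_eig_int: assumes "eigenvalue (Mp a s) x" "a \<ge> 1" "s = 1 \<or> s = -1"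
  shows "x \<in> \<int>"
proof -
  obtain v where ev: "eigenvector (Mp a s) v x" using assms(1) unfolding eigenvalue_def by auto
  have vc: "v \<in> carrier_vec 3" and v0: "v \<noteq> 0\<^sub>v 3" and eq: "Mp a s *\<^sub>v v = x \<cdot>\<^sub>v v"
    using ev unfolding eigenvector_def by (auto simp: Mp_def)
  have c: "(Mp a s *\<^sub>v v) $ i = (\<Sum>j\<in>{0..<3}. Mp a s $$ (i,j) * v $ j)" if "i < 3" for i
    using that vc by (simp add: Mp_def scalar_prod_def)
  have q0: "of_int s * of_nat (a*a) * v $ 1 = x * v $ 0"
    using c[of 0] arg_cong[OF eq, of "\<lambda>w. w $ 0"] vc by (simp add: Mp_def sum3)
  have q1: "of_int s * 7 * v $ 0 + of_int s * v $ 2 = x * v $ 1"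
    using c[of 1] arg_cong[OF eq, of "\<lambda>w. w $ 1"] vc by (simp add: Mp_def sum3)
  have q2: "of_int s * (6 * of_nat a) * v $ 0 = x * v $ 2"
    using c[of 2] arg_cong[OF eq, of "\<lambda>w. w $ 2"] vc by (simp add: Mp_def sum3)
  have nz: "\<not> (v $ 0 = 0 \<and> v $ 1 = 0 \<and> v $ 2 = 0)"
  proof
    assume h: "v $ 0 = 0 \<and> v $ 1 = 0 \<and> v $ 2 = 0"
    have "v = 0\<^sub>v 3"
    proof (rule eq_vecI)
      fix i assume "i < dim_vec (0\<^sub>v 3 :: complex vec)"
      hence "i = 0 \<or> i = 1 \<or> i = 2" by auto
      thus "v $ i = 0\<^sub>v 3 $ i" using h by auto
    qed (use vc in auto)
    thus False using v0 by simp
  qed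
  have A: "(of_nat a :: complex) \<noteq> 0" using assms(2) by simp
  define S :: complex where "S = of_int s"
  have S2: "S * S = 1" using assms(3) unfolding S_def by auto
  have SI: "S \<in> \<int>" unfolding S_def by simp
  have p0: "of_nat a * of_nat a * v$1 = (S * x) * v$0"
    using ssinv[OF S2, of "of_nat a * of_nat a * v$1" "x * v$0"] q0 unfolding S_def[symmetric] of_nat_mult
    by (simp add: ac_simps)
  have p1: "7 * v$0 + v$2 = (S * x) * v$1"
    using ssinv[OF S2, of "7 * v$0 + v$2" "x * v$1"] q1 unfolding S_def[symmetric]
    by (simp add: algebra_simps)
  have p2: "6 * of_nat a * v$0 = (S * x) * v$2"
    using ssinv[OF S2, of "6 * of_nat a * v$0" "x * v$2"] q2 unfolding S_def[symmetric]
    by (simp add: ac_simps)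
  have r: "S * x = - of_nat a \<or> S * x = -2 * of_nat a \<or> S * x = 3 * of_nat a"
    by (rule alg_roots[OF p0 p1 p2 A nz])
  have xe: "x = S * (S * x)" by (rule ssinv[OF S2 refl])
  have "S * x \<in> \<int>" using r by (auto intro: Ints_minus Ints_mult Ints_of_nat)
  hence "S * (S * x) \<in> \<int>" using SI Ints_mult by blast
  thus ?thesis using xe by metis
qed

lemma spec_int: assumes "1 \<le> p" "p < 6*a" "s = 1 \<or> s = -1"
  shows "integral_spectrum (sd_spectrum (gN a) (garc a p) (\<lambda>_ _. s))"
  unfolding integral_spectrum_def sd_spectrum_def
proof
  fix x assume x: "x \<in># proots (char_poly (adj_mat (gN a) (garc a p) (\<lambda>_ _. s)))"
  have carr: "adj_mat (gN a) (garc a p) (\<lambda>_ _. s) \<in> carrier_mat (gN a) (gN a)" by (simp add: adj_mat_def)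
  have "char_poly (adj_mat (gN a) (garc a p) (\<lambda>_ _. s)) \<noteq> 0"
    using degree_monic_char_poly[OF carr] by auto
  with x have "poly (char_poly (adj_mat (gN a) (garc a p) (\<lambda>_ _. s))) x = 0" by simp
  hence "poly (monom 1 7 * char_poly (adj_mat (gN a) (garc a p) (\<lambda>_ _. s))) x = 0" by simp
  hence "poly (monom 1 (gN a + 4) * char_poly (Mp a s)) x = 0" unfolding cp_chain[OF assms(1,2)] .
  hence "x = 0 \<or> poly (char_poly (Mp a s)) x = 0" by (simp add: poly_monom)
  thus "x \<in> \<int>"
  proof
    assume "poly (char_poly (Mp a s)) x = 0"
    hence "eigenvalue (Mp a s) x" by (subst eigenvalue_root_char_poly[of _ 3], auto simp: Mp_def)
    thus ?thesis using mp_eig_int assms by auto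
  qed simp
qed



lemma garc_digraph: assumes "p < 6*a" shows "is_digraph (gN a) (garc a p)"
  unfolding is_digraph_def garc_def using assms by (auto simp: supp_def vtyp_def cdefs split: if_splits)

lemma rel_step: "garc a p x y \<Longrightarrow> (y, z) \<in> {(u, v). garc a p u v}\<^sup>* \<Longrightarrow> (x, z) \<in> {(u, v). garc a p u v}\<^sup>*"
  by (rule converse_rtrancl_into_rtrancl, auto)
lemma rel_one: "garc a p x y \<Longrightarrow> (x, y) \<in> {(u, v). garc a p u v}\<^sup>*"
  by auto

lemma to0: assumes "1 \<le> p" "p < 6*a" "u < gN a"
  shows "(u, 0) \<in> {(x, y). garc a p x y}\<^sup>*"
proof -
  have a: "a \<ge> 1" using assms by simp
  have zero: "garc a p w 0" if "w < gN a" "\<not> cC a w" "w \<noteq> y1 a" "\<not> cY2 a p w" for w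
    using that a by (auto simp: garc_def vtyp_def supp_def cdefs)
  show ?thesis
  proof (cases "cC a u")
    case True
    have "garc a p u (a*a)" using True a by (auto simp: garc_def vtyp_def supp_def cdefs)
    moreover have "garc a p (a*a) 0" by (rule zero, insert a, auto simp: cdefs)
    ultimately show ?thesis by (metis rel_one rel_step)
  next
    case nC: False
    show ?thesis
    proof (cases "u = y1 a")
      case True
      have "garc a p u (a*a+8)" using True assms by (auto simp: garc_def vtyp_def supp_def cdefs)
      moreover have "garc a p (a*a+8) 0" by (rule zero, insert assms, auto simp: cdefs)
      ultimately show ?thesis by (metis rel_one rel_step)
    next
      case ny: False
      show ?thesis
      proof (cases "cY2 a p u")
        case True
        have "garc a p u (z2 a)" using True assms nC ny by (auto simp: garc_def vtyp_def supp_def cdefs)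
        moreover have "garc a p (z2 a) 0" by (rule zero, insert assms, auto simp: cdefs)
        ultimately show ?thesis by (metis rel_one rel_step)
      next
        case False
        thus ?thesis using zero[OF assms(3) nC ny False] by (metis rel_one)
      qed
    qed
  qed
qed

lemma from0: assumes "1 \<le> p" "p < 6*a" "v < gN a"
  shows "(0, v) \<in> {(x, y). garc a p x y}\<^sup>*"
proof -
  have a: "a \<ge> 1" using assms by simp
  have g0: "garc a p 0 w" if "cX a w \<or> w = y1 a \<or> cY2 a p w" for w
    using that a by (auto simp: garc_def vtyp_def supp_def cdefs)
  have "cC a v \<or> cX a v \<or> v = y1 a \<or> cY2 a p v \<or> cZ1 a p v \<or> v = z2 a"
    using assms by (auto simp: cdefs)
  thus ?thesis
  proof (elim disjE)
    assume h: "cC a v"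
    have "garc a p 0 (a*a)" by (rule g0, auto simp: cdefs)
    moreover have "garc a p (a*a) v" using h a by (auto simp: garc_def vtyp_def supp_def cdefs)
    ultimately show ?thesis by (metis rel_one rel_step)
  next
    assume h: "cZ1 a p v"
    have "garc a p 0 (y1 a)" by (rule g0, auto)
    moreover have "garc a p (y1 a) v" using h a by (auto simp: garc_def vtyp_def supp_def cdefs)
    ultimately show ?thesis by (metis rel_one rel_step)
  next
    assume h: "v = z2 a"
    have "garc a p 0 (a*a+8+p)" by (rule g0, insert assms, auto simp: cdefs)
    moreover have "garc a p (a*a+8+p) v" using h assms by (auto simp: garc_def vtyp_def supp_def cdefs)
    ultimately show ?thesis by (metis rel_one rel_step)
  qed (auto intro: g0 rel_one)
qed

lemma garc_sc: assumes "1 \<le> p" "p < 6*a" shows "strongly_connected (gN a) (garc a p)"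
  unfolding strongly_connected_def using to0[OF assms] from0[OF assms] by (meson rtrancl_trans)

lemma garc_nonsym: assumes "1 \<le> p" "p < 6*a" shows "\<not> symmetric_dg (garc a p)"
proof -
  have "garc a p 0 (y1 a)" using assms by (auto simp: garc_def vtyp_def supp_def cdefs)
  moreover have "\<not> garc a p (y1 a) 0" using assms by (auto simp: garc_def vtyp_def supp_def cdefs)
  ultimately show ?thesis unfolding symmetric_dg_def by blast
qed

lemma garc_unbal: assumes "1 \<le> p" "p < 6*a" shows "\<not> cycle_balanced (gN a) (garc a p) (\<lambda>_ _. -1)"
proof -
  let ?vs = "[0, y1 a, a*a+8]"
  have r1: "garc a p 0 (y1 a)" and r2: "garc a p (y1 a) (a*a+8)" and r3: "garc a p (a*a+8) 0"
    using assms by (auto simp: garc_def vtyp_def supp_def cdefs)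
  have arcs: "\<forall>i < length ?vs. garc a p (?vs ! i) (?vs ! ((i + 1) mod length ?vs))"
  proof (intro allI impI)
    fix i assume "i < length ?vs"
    hence "i = 0 \<or> i = 1 \<or> i = 2" by auto
    thus "garc a p (?vs ! i) (?vs ! ((i + 1) mod length ?vs))" using r1 r2 r3 by auto
  qed
  have "is_dcycle (gN a) (garc a p) ?vs"
    unfolding is_dcycle_def using arcs assms by (auto simp: cdefs)
  moreover have "cycle_sign (\<lambda>_ _. -1) ?vs = -1" by (simp add: cycle_sign_def)
  ultimately show ?thesis unfolding cycle_balanced_def by force
qed



lemma outset: "u < gN a \<Longrightarrow> {w \<in> {0..<gN a}. garc a p u w} = {w \<in> {0..<gN a}. supp a p (vtyp a p u) w}"
  by (auto simp: garc_def)

lemma card_supp: assumes "p < 6*a" "b < 4"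
  shows "card {w \<in> {0..<gN a}. supp a p b w} = (if b = 0 then a*a else if b = 1 then 8 + 6*a - p else if b = 2 then p else 1)"
proof -
  have "b = 0 \<or> b = 1 \<or> b = 2 \<or> b = 3" using assms(2) by auto
  thus ?thesis
  proof (elim disjE)
    assume b: "b = 0"
    have "{w \<in> {0..<gN a}. supp a p b w} = {0..<a*a}" using b by (auto simp: supp_def cdefs)
    thus ?thesis using b by simp
  next
    assume b: "b = 1"
    have "{w \<in> {0..<gN a}. supp a p b w} = {a*a..<a*a+8} \<union> {a*a+8+p..<a*a+6*a+8}"
      using b assms by (auto simp: supp_def cdefs)
    moreover have "card ({a*a..<a*a+8} \<union> {a*a+8+p..<a*a+6*a+8}) = 8 + (6*a - p)"
      by (subst card_Un_disjoint, auto)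
    ultimately show ?thesis using b assms by simp
  next
    assume b: "b = 2"
    have "{w \<in> {0..<gN a}. supp a p b w} = {a*a+8..<a*a+8+p}" using b assms by (auto simp: supp_def cdefs)
    thus ?thesis using b by simp
  next
    assume b: "b = 3"
    have "{w \<in> {0..<gN a}. supp a p b w} = {a*a+6*a+8}" using b by (auto simp: supp_def cdefs)
    thus ?thesis using b by simp
  qed
qed

lemma od_vals: assumes "p < 6*a" "u < gN a"
  shows "card {w \<in> {0..<gN a}. garc a p u w} \<in> {a*a, 8 + 6*a - p, p, 1}"
  unfolding outset[OF assms(2)] card_supp[OF assms(1) vtyp_lt] by auto

lemma od0: assumes "p < 6*a"
  shows "card {w \<in> {0..<gN a}. garc a p 0 w} = 8 + 6*a - p"
proof -
  have "vtyp a p 0 = 1" using assms by (auto simp: vtyp_def cdefs)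
  moreover have "0 < gN a" by (simp add: gN_def)
  ultimately show ?thesis unfolding outset[OF \<open>0 < gN a\<close>] using card_supp[OF assms, of 1] by simp
qed

lemma iso_od: assumes "dg_isomorphic N arc1 arc2" "u < N"
  shows "\<exists>u' < N. card {w \<in> {0..<N}. arc2 u' w} = card {w \<in> {0..<N}. arc1 u w}"
proof -
  obtain f where bij: "bij_betw f {0..<N} {0..<N}" and iso: "\<forall>u<N. \<forall>v<N. arc1 u v \<longleftrightarrow> arc2 (f u) (f v)"
    using assms(1) unfolding dg_isomorphic_def by blast
  have fu: "f u < N" using bij assms(2) by (auto dest: bij_betw_apply)
  have "{w \<in> {0..<N}. arc2 (f u) w} = f ` {w \<in> {0..<N}. arc1 u w}"
  proof (intro equalityI subsetI)
    fix w assume w: "w \<in> {w \<in> {0..<N}. arc2 (f u) w}"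
    have "w \<in> f ` {0..<N}" using bij w unfolding bij_betw_def by auto
    then obtain v where v: "v \<in> {0..<N}" "w = f v" by blast
    thus "w \<in> f ` {w \<in> {0..<N}. arc1 u w}" using iso w assms(2) by auto
  next
    fix w assume "w \<in> f ` {w \<in> {0..<N}. arc1 u w}"
    then obtain v where v: "v < N" "arc1 u v" "w = f v" by auto
    thus "w \<in> {w \<in> {0..<N}. arc2 (f u) w}" using iso assms(2) bij by (auto dest: bij_betw_apply)
  qed
  moreover have "inj_on f {w \<in> {0..<N}. arc1 u w}"
    using bij_betw_imp_inj_on[OF bij] by (rule inj_on_subset, auto)
  ultimately show ?thesis using fu by (intro exI[of _ "f u"], auto simp: card_image)
qed

lemma garc_noniso: assumes "8 \<le> a" "1 \<le> p" "1 \<le> p'" "p \<noteq> p'" "p + p' < 6*a"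
  shows "\<not> dg_isomorphic (gN a) (garc a p) (garc a p')"
proof
  assume "dg_isomorphic (gN a) (garc a p) (garc a p')"
  from iso_od[OF this, of 0] obtain u' where u': "u' < gN a"
    "card {w \<in> {0..<gN a}. garc a p' u' w} = card {w \<in> {0..<gN a}. garc a p 0 w}"
    by (auto simp: gN_def)
  have p: "p < 6*a" "p' < 6*a" using assms by auto
  have "8 + 6*a - p \<in> {a*a, 8 + 6*a - p', p', 1}" using od_vals[OF p(2) u'(1)] u'(2) od0[OF p(1)] by simp
  moreover have "8*a \<le> a*a" using assms(1) by simp
  ultimately show False using assms p by (simp only: insert_iff empty_iff) arith
qed

lemma four_n: "4 \<le> n \<Longrightarrow> 4 * n \<le> (2::nat)^n"
proof (induction n rule: dec_induct)
  case base show ?case by simp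
next
  case (step m) thus ?case by simp
qed

theorem theorem2p15:
  fixes n :: nat
  assumes "n \<ge> 4"
  shows "\<exists>D :: nat \<Rightarrow> (nat \<Rightarrow> nat \<Rightarrow> bool).
     (\<forall>i<n. is_digraph (4 ^ n) (D i) \<and> strongly_connected (4 ^ n) (D i) \<and> \<not> symmetric_dg (D i)) \<and>
     (\<forall>i<n. \<forall>j<n. i \<noteq> j \<longrightarrow> \<not> dg_isomorphic (4 ^ n) (D i) (D j) \<and>
        integral_strongly_quasi_cospectral (4 ^ n) (D i) (D j))"
proof -
  define a :: nat where "a = 2^n - 3"
  have h4: "4 * n \<le> 2^n" by (rule four_n[OF assms])
  have "(2::nat)^4 \<le> 2^n" by (rule power_increasing[OF assms], simp)
  hence h16: "16 \<le> (2::nat)^n" by simp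
  have a8: "8 \<le> a" using h16 unfolding a_def by simp
  have a3: "2^n = a + 3" using h16 unfolding a_def by simp
  have N: "4 ^ n = gN a"
  proof -
    have "(4::nat) ^ n = (2^n) * (2^n)" by (simp add: power_mult_distrib[symmetric])
    also have "\<dots> = gN a" unfolding a3 gN_def by (simp add: algebra_simps)
    finally show ?thesis .
  qed
  have pv: "1 \<le> i + 1 \<and> i + 1 < 6*a" if "i < n" for i using that h4 a3 by linarith
  show ?thesis unfolding N
  proof (intro exI[of _ "\<lambda>i. garc a (i+1)"] conjI allI impI)
    fix i assume i: "i < n"
    show "is_digraph (gN a) (garc a (i+1))" using garc_digraph pv[OF i] by auto
    show "strongly_connected (gN a) (garc a (i+1))" using garc_sc pv[OF i] by auto
    show "\<not> symmetric_dg (garc a (i+1))" using garc_nonsym pv[OF i] by auto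
  next
    fix i j assume i: "i < n" and j: "j < n" and ij: "i \<noteq> j"
    have pi: "1 \<le> i+1" "i+1 < 6*a" and pj: "1 \<le> j+1" "j+1 < 6*a" using pv[OF i] pv[OF j] by auto
    show "\<not> dg_isomorphic (gN a) (garc a (i+1)) (garc a (j+1))"
      by (rule garc_noniso, insert a8 ij i j h4 a3, auto)
    show "integral_strongly_quasi_cospectral (gN a) (garc a (i+1)) (garc a (j+1))"
      unfolding integral_strongly_quasi_cospectral_def
    proof (intro conjI exI[of _ "\<lambda>_ _. -1"])
      show "dg_spectrum (gN a) (garc a (i+1)) = dg_spectrum (gN a) (garc a (j+1))"
        unfolding dg_spectrum_def sd_spectrum_def using cp_eq[OF pi pj, of 1] by simp
      show "integral_spectrum (dg_spectrum (gN a) (garc a (i+1)))"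
        unfolding dg_spectrum_def using spec_int[OF pi, of 1] by simp
      show "is_signing (garc a (i+1)) (\<lambda>_ _. -1)" by (simp add: is_signing_def)
      show "is_signing (garc a (j+1)) (\<lambda>_ _. -1)" by (simp add: is_signing_def)
      show "\<not> cycle_balanced (gN a) (garc a (i+1)) (\<lambda>_ _. -1)" by (rule garc_unbal[OF pi])
      show "\<not> cycle_balanced (gN a) (garc a (j+1)) (\<lambda>_ _. -1)" by (rule garc_unbal[OF pj])
      show "sd_spectrum (gN a) (garc a (i+1)) (\<lambda>_ _. -1) = sd_spectrum (gN a) (garc a (j+1)) (\<lambda>_ _. -1)"
        unfolding sd_spectrum_def using cp_eq[OF pi pj, of "-1"] by simp
      show "integral_spectrum (sd_spectrum (gN a) (garc a (i+1)) (\<lambda>_ _. -1))"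
        using spec_int[OF pi, of "-1"] by simp
    qed
  qed
qed


end
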